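(* Let $(\phi_1,\dots,\phi_n)$, $n\ge2$, be a Chebyshev asymptotic scale on $[T,x_0[$ with $\phi_i\in AC^{n-1}[T,x_0[$ and $W(\phi_1,\dots,\phi_i)>0$ on $[T,x_0[$ for $1\le i\le n$. Let $a_1,\dots,a_n$ be nonzero real constants and $u:=a_1\phi_1+\dots+a_n\phi_n$. Define $\psi^{(1)}_j:=\phi_j$ ($1\le j\le n$) and recursively, for $k=1,\dots,n-1$, $\psi^{(k+1)}_j:=\big(\psi^{(k)}_j/\psi^{(k)}_k\big)'$ for $k+1\le j\le n$; define $U_1:=u$ and $U_{k+1}:=\big(U_k/\psi^{(k)}_k\big)'$ for $1\le k\le n$. Then all these functions are well defined on $[T,x_0[$, each $\psi^{(k)}_k$ never vanishes on $[T,x_0[$, and for $1\le k\le n$: $U_k=\sum_{j=k}^na_j\psi^{(k)}_j$ on $[T,x_0[$ with $\psi^{(k)}_k\gg\psi^{(k)}_{k+1}\gg\dots\gg\psi^{(k)}_n$ as $x\to x_0^-$; $1/\psi^{(k)}_k=q_{k-1}$ on $[T,x_0[$; $U_{n+1}\equiv0$, i.e. $[q_{n-1}(\cdots(q_0u)'\cdots)']'\equiv0$ on $[T,x_0[$; $M_{k-1}u=U_k/\psi^{(k)}_k$; and $a_k=\lim_{x\to x_0^-}M_{k-1}u(x)$.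
   Context: $T\in\mathbb R$, $x_0\in\mathbb R\cup\{+\infty\}$, $T<x_0$. $AC^k(I)$: functions whose $k$-th derivative is absolutely continuous on every compact subinterval of $I$. $W(\cdot)$ is the Wronskian; $g\gg h$ as $x\to x_0^-$ means $h/g\to0$. A Chebyshev asymptotic scale on $[T,x_0[$: real $\phi_i\in C^{n-1}[T,x_0[$, each nonzero on a left deleted neighbourhood of $x_0$, $\phi_1\gg\dots\gg\phi_n$ as $x\to x_0^-$, $W(\phi_1,\dots,\phi_i)\neq0$ on $[T,x_0[$. With $W_i:=W(\phi_1,\dots,\phi_i)$, $W_0:=1$: $q_0:=1/|\phi_1|$, $q_i:=W_i^2/|W_{i-1}W_{i+1}|$ ($1\le i\le n-1$), $q_n:=|W_n/W_{n-1}|$; $M_0v:=q_0v$, $M_kv:=q_k(M_{k-1}v)'$. *)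

theory Defs
  imports "HOL-Analysis.Analysis"
begin

definition lint :: "real \<Rightarrow> ereal \<Rightarrow> real set" where
  "lint T x0 = {x. T \<le> x \<and> ereal x < x0}"

definition left_filter :: "ereal \<Rightarrow> real filter" where
  "left_filter x0 = (if x0 = \<infinity> then at_top else at_left (real_of_ereal x0))"

definition dominates :: "real filter \<Rightarrow> (real \<Rightarrow> real) \<Rightarrow> (real \<Rightarrow> real) \<Rightarrow> bool" where
  "dominates F g h \<longleftrightarrow> ((\<lambda>x. h x / g x) \<longlongrightarrow> 0) F"

text \<open>Derivative relative to the set S (one-sided at endpoints belonging to S).\<close>
definition Dw :: "real set \<Rightarrow> (real \<Rightarrow> real) \<Rightarrow> real \<Rightarrow> real" where
  "Dw S f x = vector_derivative f (at x within S)"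

definition hderiv :: "real set \<Rightarrow> nat \<Rightarrow> (real \<Rightarrow> real) \<Rightarrow> real \<Rightarrow> real" where
  "hderiv S k f = (Dw S ^^ k) f"

definition Ck_on :: "real set \<Rightarrow> nat \<Rightarrow> (real \<Rightarrow> real) \<Rightarrow> bool" where
  "Ck_on S k f \<longleftrightarrow>
     (\<forall>j<k. \<forall>x\<in>S. (hderiv S j f has_vector_derivative hderiv S (Suc j) f x) (at x within S))
     \<and> continuous_on S (hderiv S k f)"

definition abs_cont_on :: "real \<Rightarrow> real \<Rightarrow> (real \<Rightarrow> real) \<Rightarrow> bool" where
  "abs_cont_on c d f \<longleftrightarrow>
     (\<forall>\<epsilon>>0. \<exists>\<delta>>0. \<forall>(m::nat) (l::nat \<Rightarrow> real) r.
        (\<forall>i<m. c \<le> l i \<and> l i \<le> r i \<and> r i \<le> d) \<and>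
        (\<forall>i<m. \<forall>j<m. i \<noteq> j \<longrightarrow> r i \<le> l j \<or> r j \<le> l i) \<and>
        (\<Sum>i<m. r i - l i) < \<delta>
        \<longrightarrow> (\<Sum>i<m. \<bar>f (r i) - f (l i)\<bar>) < \<epsilon>)"

definition ACk_on :: "real set \<Rightarrow> nat \<Rightarrow> (real \<Rightarrow> real) \<Rightarrow> bool" where
  "ACk_on S k f \<longleftrightarrow> (\<forall>c d. {c..d} \<subseteq> S \<longrightarrow> abs_cont_on c d (hderiv S k f))"

definition wronskian :: "real set \<Rightarrow> (nat \<Rightarrow> real \<Rightarrow> real) \<Rightarrow> nat \<Rightarrow> real \<Rightarrow> real" where
  "wronskian S \<phi> i x =
     (\<Sum>p | p permutes {0..<i}. of_int (sign p) * (\<Prod>r<i. hderiv S r (\<phi> (Suc (p r))) x))"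

definition cheb_asym_scale :: "real \<Rightarrow> ereal \<Rightarrow> nat \<Rightarrow> (nat \<Rightarrow> real \<Rightarrow> real) \<Rightarrow> bool" where
  "cheb_asym_scale T x0 n \<phi> \<longleftrightarrow>
     (\<forall>i\<in>{1..n}. Ck_on (lint T x0) (n - 1) (\<phi> i)) \<and>
     (\<forall>i\<in>{1..n}. eventually (\<lambda>x. \<phi> i x \<noteq> 0) (left_filter x0)) \<and>
     (\<forall>i\<in>{1..<n}. dominates (left_filter x0) (\<phi> i) (\<phi> (Suc i))) \<and>
     (\<forall>i\<in>{1..n}. \<forall>x\<in>lint T x0. wronskian (lint T x0) \<phi> i x \<noteq> 0)"

definition qfun :: "real set \<Rightarrow> (nat \<Rightarrow> real \<Rightarrow> real) \<Rightarrow> nat \<Rightarrow> nat \<Rightarrow> real \<Rightarrow> real" where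
  "qfun S \<phi> n i x =
     (let W = (\<lambda>k. wronskian S \<phi> k x) in
      if i = 0 then 1 / \<bar>\<phi> 1 x\<bar>
      else if i < n then (W i)^2 / \<bar>W (i - 1) * W (Suc i)\<bar>
      else \<bar>W n / W (n - 1)\<bar>)"

primrec Mop :: "real set \<Rightarrow> (nat \<Rightarrow> real \<Rightarrow> real) \<Rightarrow> nat \<Rightarrow> nat \<Rightarrow> (real \<Rightarrow> real) \<Rightarrow> real \<Rightarrow> real" where
  "Mop S \<phi> n 0 v = (\<lambda>x. qfun S \<phi> n 0 x * v x)"
| "Mop S \<phi> n (Suc k) v = (\<lambda>x. qfun S \<phi> n (Suc k) x * Dw S (Mop S \<phi> n k v) x)"

text \<open>psi^{(k)}_j : psi^{(1)}_j = phi_j, psi^{(k+1)}_j = (psi^{(k)}_j / psi^{(k)}_k)'.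
  (The index k = 0 is unused.)\<close>
fun psi :: "real set \<Rightarrow> (nat \<Rightarrow> real \<Rightarrow> real) \<Rightarrow> nat \<Rightarrow> nat \<Rightarrow> real \<Rightarrow> real" where
  "psi S \<phi> 0 j = \<phi> j"
| "psi S \<phi> (Suc 0) j = \<phi> j"
| "psi S \<phi> (Suc (Suc k)) j =
     Dw S (\<lambda>y. psi S \<phi> (Suc k) j y / psi S \<phi> (Suc k) (Suc k) y)"

text \<open>U_1 = u, U_{k+1} = (U_k / psi^{(k)}_k)'. (The index k = 0 is unused.)\<close>
fun Ufun :: "real set \<Rightarrow> (nat \<Rightarrow> real \<Rightarrow> real) \<Rightarrow> (real \<Rightarrow> real) \<Rightarrow> nat \<Rightarrow> real \<Rightarrow> real" where
  "Ufun S \<phi> u 0 = u"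
| "Ufun S \<phi> u (Suc 0) = u"
| "Ufun S \<phi> u (Suc (Suc k)) =
     Dw S (\<lambda>y. Ufun S \<phi> u (Suc k) y / psi S \<phi> (Suc k) (Suc k) y)"

end

theory Submission
  imports Defs "Jordan_Normal_Form.Determinant"
begin

definition okS :: "real set \<Rightarrow> bool" where "okS S \<longleftrightarrow> (\<forall>x\<in>S. at x within S \<noteq> bot)"

lemma hv_iff: "(f has_vector_derivative D) F \<longleftrightarrow> (f has_field_derivative D) F" for f :: "real\<Rightarrow>real"
  by (simp add: has_real_derivative_iff_has_vector_derivative)

lemma Dw_eqI: "okS S \<Longrightarrow> x\<in>S \<Longrightarrow> (f has_field_derivative D) (at x within S) \<Longrightarrow> Dw S f x = D"
  unfolding Dw_def okS_def by (auto intro!: vector_derivative_within simp: hv_iff)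

lemma Dw_cong: assumes "\<forall>y\<in>S. f y = g y" "x\<in>S" shows "Dw S f x = Dw S g x"
proof -
  have "(f has_vector_derivative D) (at x within S) \<longleftrightarrow> (g has_vector_derivative D) (at x within S)" for D
    using has_vector_derivative_transform[of x S f g D] has_vector_derivative_transform[of x S g f D] assms by auto
  then show ?thesis unfolding Dw_def vector_derivative_def by simp
qed

lemma hfd_transform: "x \<in> S \<Longrightarrow> \<forall>y\<in>S. g y = f y \<Longrightarrow> (f has_field_derivative D) (at x within S) \<Longrightarrow>
   (g has_field_derivative D) (at x within S)"
  for f g :: "real \<Rightarrow> real"
  using has_vector_derivative_transform[of x S g f D] by (simp add: hv_iff)

lemma hderiv_0[simp]: "hderiv S 0 f = f" by (simp add: hderiv_def)
lemma hderiv_Suc: "hderiv S (Suc k) f = Dw S (hderiv S k f)" by (simp add: hderiv_def)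
lemma hderiv_Suc': "hderiv S (Suc k) f = hderiv S k (Dw S f)" by (simp add: hderiv_def funpow_Suc_right del: funpow.simps)

lemma hderiv_cong: "\<forall>y\<in>S. f y = g y \<Longrightarrow> x\<in>S \<Longrightarrow> hderiv S k f x = hderiv S k g x"
proof (induction k arbitrary: x)
  case 0 then show ?case by simp
next
  case (Suc k) then show ?case by (simp add: hderiv_Suc Dw_cong)
qed

lemma Ck_0: "Ck_on S 0 f \<longleftrightarrow> continuous_on S f" by (simp add: Ck_on_def)

lemma Ck_Suc: "Ck_on S (Suc k) f \<longleftrightarrow>
   (\<forall>x\<in>S. (f has_field_derivative Dw S f x) (at x within S)) \<and> Ck_on S k (Dw S f)"
proof -
  have "(\<forall>j<Suc k. P j) \<longleftrightarrow> P 0 \<and> (\<forall>j<k. P (Suc j))" for P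
    using less_Suc_eq_0_disj by auto
  then show ?thesis unfolding Ck_on_def hderiv_Suc'[of S k f]
    by (simp add: hderiv_Suc'[symmetric] hv_iff) (simp add: hderiv_Suc')
qed

lemma Ck_cong: "\<forall>y\<in>S. f y = g y \<Longrightarrow> Ck_on S k f \<Longrightarrow> Ck_on S k g"
proof (induction k arbitrary: f g)
  case 0 then show ?case by (simp add: Ck_0 cong: continuous_on_cong)
next
  case (Suc k)
  have d: "\<forall>y\<in>S. Dw S f y = Dw S g y" using Suc.prems(1) Dw_cong by blast
  show ?case unfolding Ck_Suc
  proof
    show "\<forall>x\<in>S. (g has_field_derivative Dw S g x) (at x within S)"
      using Suc.prems d unfolding Ck_Suc
      by (metis (no_types, lifting) has_field_derivative_transform_within_open has_real_derivative_iff_has_vector_derivative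
          has_vector_derivative_transform)
    show "Ck_on S k (Dw S g)" using Suc.IH[OF d] Suc.prems(2) unfolding Ck_Suc by blast
  qed
qed

lemma Ck_cont: "Ck_on S k f \<Longrightarrow> continuous_on S f"
proof (induction k arbitrary: f)
  case 0 then show ?case by (simp add: Ck_0)
next
  case (Suc k) then show ?case unfolding Ck_Suc
    by (meson DERIV_continuous continuous_on_eq_continuous_within)
qed

lemma Ck_Suc_mono: "Ck_on S (Suc k) f \<Longrightarrow> Ck_on S k f"
proof (induction k arbitrary: f)
  case 0 then show ?case using Ck_cont by (simp add: Ck_0)
next
  case (Suc k) then show ?case unfolding Ck_Suc[of S "Suc k"] Ck_Suc[of S k] by blast
qed

lemma Ck_mono: "j \<le> k \<Longrightarrow> Ck_on S k f \<Longrightarrow> Ck_on S j f"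
  by (induction k rule: dec_induct) (auto intro: Ck_Suc_mono)
  
lemma Ck_mono': "j \<le> k \<Longrightarrow> Ck_on S k f \<Longrightarrow> Ck_on S j f"
proof (induction k)
  case 0 then show ?case by simp
next
  case (Suc k) then show ?case using Ck_Suc_mono le_Suc_eq by blast
qed

lemma Ck_const: "okS S \<Longrightarrow> Ck_on S k (\<lambda>_. c)"
proof (induction k arbitrary: c)
  case 0 then show ?case by (simp add: Ck_0)
next
  case (Suc k)
  have "\<forall>x\<in>S. Dw S (\<lambda>_. c) x = 0" using Suc.prems by (auto intro!: Dw_eqI)
  then have "Ck_on S k (Dw S (\<lambda>_. c))" using Suc.IH[OF Suc.prems, of 0] Ck_cong by (metis (no_types, lifting))
  moreover have "\<forall>x\<in>S. ((\<lambda>_. c) has_field_derivative Dw S (\<lambda>_. c) x) (at x within S)"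
    using \<open>\<forall>x\<in>S. Dw S (\<lambda>_. c) x = 0\<close> by simp
  ultimately show ?case by (simp add: Ck_Suc)
qed

lemma Ck_add: "okS S \<Longrightarrow> Ck_on S k f \<Longrightarrow> Ck_on S k g \<Longrightarrow> Ck_on S k (\<lambda>y. f y + g y)"
proof (induction k arbitrary: f g)
  case 0 then show ?case by (simp add: Ck_0 continuous_on_add)
next
  case (Suc k)
  have df: "\<forall>x\<in>S. (f has_field_derivative Dw S f x) (at x within S)" and 
       dg: "\<forall>x\<in>S. (g has_field_derivative Dw S g x) (at x within S)"
    using Suc.prems unfolding Ck_Suc by auto
  have d: "\<forall>x\<in>S. ((\<lambda>y. f y + g y) has_field_derivative Dw S f x + Dw S g x) (at x within S)"
    using df dg by (auto intro!: derivative_eq_intros)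
  have e: "\<forall>x\<in>S. Dw S f x + Dw S g x = Dw S (\<lambda>y. f y + g y) x"
    using d Suc.prems(1) by (auto intro!: Dw_eqI[symmetric])
  have "Ck_on S k (\<lambda>x. Dw S f x + Dw S g x)" using Suc unfolding Ck_Suc by auto
  then have "Ck_on S k (Dw S (\<lambda>y. f y + g y))" using Ck_cong[OF e] by blast
  then show ?case unfolding Ck_Suc using d e by simp
qed

lemma Ck_mult: "okS S \<Longrightarrow> Ck_on S k f \<Longrightarrow> Ck_on S k g \<Longrightarrow> Ck_on S k (\<lambda>y. f y * g y)"
proof (induction k arbitrary: f g)
  case 0 then show ?case by (simp add: Ck_0 continuous_on_mult)
next
  case (Suc k)
  have df: "\<forall>x\<in>S. (f has_field_derivative Dw S f x) (at x within S)" and 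
       dg: "\<forall>x\<in>S. (g has_field_derivative Dw S g x) (at x within S)"
    using Suc.prems unfolding Ck_Suc by auto
  have d: "\<forall>x\<in>S. ((\<lambda>y. f y * g y) has_field_derivative Dw S f x * g x + f x * Dw S g x) (at x within S)"
    using df dg by (auto intro!: derivative_eq_intros)
  have e: "\<forall>x\<in>S. Dw S f x * g x + f x * Dw S g x = Dw S (\<lambda>y. f y * g y) x"
    using d Suc.prems(1) by (auto intro!: Dw_eqI[symmetric])
  have "Ck_on S k f" "Ck_on S k g" "Ck_on S k (Dw S f)" "Ck_on S k (Dw S g)"
    using Suc.prems Ck_Suc_mono unfolding Ck_Suc by auto
  then have "Ck_on S k (\<lambda>x. Dw S f x * g x + f x * Dw S g x)" using Suc by (simp add: Ck_add)
  then have "Ck_on S k (Dw S (\<lambda>y. f y * g y))" using Ck_cong[OF e] by blast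
  then show ?case unfolding Ck_Suc using d e by simp
qed

lemma Ck_inv: "okS S \<Longrightarrow> Ck_on S k g \<Longrightarrow> \<forall>x\<in>S. g x \<noteq> 0 \<Longrightarrow> Ck_on S k (\<lambda>y. 1 / g y)"
proof (induction k arbitrary: g)
  case 0 then show ?case by (auto simp add: Ck_0 intro!: continuous_on_divide continuous_on_const)
next
  case (Suc k)
  have dg: "\<forall>x\<in>S. (g has_field_derivative Dw S g x) (at x within S)"
    using Suc.prems unfolding Ck_Suc by auto
  have d: "\<forall>x\<in>S. ((\<lambda>y. 1 / g y) has_field_derivative - Dw S g x * (1 / g x) * (1 / g x)) (at x within S)"
    using dg Suc.prems(3) by (auto intro!: derivative_eq_intros simp: power2_eq_square field_simps)
  have e: "\<forall>x\<in>S. - Dw S g x * (1 / g x) * (1 / g x) = Dw S (\<lambda>y. 1 / g y) x"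
    using d Suc.prems(1) by (auto intro!: Dw_eqI[symmetric])
  have inv: "Ck_on S k (\<lambda>y. 1 / g y)" and dd: "Ck_on S k (Dw S g)"
    using Suc Ck_Suc_mono unfolding Ck_Suc by auto
  have neg: "Ck_on S k (\<lambda>y. - Dw S g y)"
    using Ck_mult[OF Suc.prems(1) Ck_const[OF Suc.prems(1), of k "-1"] dd] by simp
  have m1: "Ck_on S k (\<lambda>x. - Dw S g x * (1 / g x))" using Ck_mult[OF Suc.prems(1) neg inv] .
  have "Ck_on S k (\<lambda>x. - Dw S g x * (1 / g x) * (1 / g x))" using Ck_mult[OF Suc.prems(1) m1 inv] .
  then have "Ck_on S k (Dw S (\<lambda>y. 1 / g y))" using Ck_cong[OF e] by blast
  then show ?case unfolding Ck_Suc using d e by simp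
qed

lemma Ck_div: "okS S \<Longrightarrow> Ck_on S k f \<Longrightarrow> Ck_on S k g \<Longrightarrow> \<forall>x\<in>S. g x \<noteq> 0 \<Longrightarrow> Ck_on S k (\<lambda>y. f y / g y)"
  using Ck_mult[OF _ _ Ck_inv, of S k f g] by (simp add: divide_inverse)

lemma Ck_Dw: "Ck_on S (Suc k) f \<Longrightarrow> Ck_on S k (Dw S f)" by (simp add: Ck_Suc)

lemma Ck_hderiv: "Ck_on S (k + j) f \<Longrightarrow> Ck_on S k (hderiv S j f)"
proof (induction j arbitrary: f)
  case 0 then show ?case by simp
next
  case (Suc j) then show ?case by (simp add: hderiv_Suc' Ck_Suc)
qed

lemma hderiv_add: "okS S \<Longrightarrow> Ck_on S r f \<Longrightarrow> Ck_on S r g \<Longrightarrow> x \<in> S \<Longrightarrow>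
   hderiv S r (\<lambda>y. f y + g y) x = hderiv S r f x + hderiv S r g x"
proof (induction r arbitrary: f g x)
  case 0 then show ?case by simp
next
  case (Suc r)
  have df: "\<forall>x\<in>S. (f has_field_derivative Dw S f x) (at x within S)" and 
       dg: "\<forall>x\<in>S. (g has_field_derivative Dw S g x) (at x within S)"
    using Suc.prems unfolding Ck_Suc by auto
  have e: "\<forall>x\<in>S. Dw S (\<lambda>y. f y + g y) x = Dw S f x + Dw S g x"
    using df dg Suc.prems(1) by (auto intro!: Dw_eqI derivative_eq_intros)
  have "hderiv S (Suc r) (\<lambda>y. f y + g y) x = hderiv S r (\<lambda>y. Dw S f y + Dw S g y) x"
    unfolding hderiv_Suc' using hderiv_cong[OF e Suc.prems(4)] .
  also have "\<dots> = hderiv S r (Dw S f) x + hderiv S r (Dw S g) x"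
    using Suc by (simp add: Ck_Suc)
  finally show ?case by (simp add: hderiv_Suc')
qed

lemma binom_comb:
  fixes a b :: "nat \<Rightarrow> real"
  shows "(\<Sum>s\<le>r. of_nat (r choose s) * a (Suc r - s) * b s) + (\<Sum>s\<le>r. of_nat (r choose s) * a (r - s) * b (Suc s))
     = (\<Sum>s\<le>Suc r. of_nat (Suc r choose s) * a (Suc r - s) * b s)"
proof -
  have "(\<Sum>s\<le>Suc r. of_nat (Suc r choose s) * a (Suc r - s) * b s)
      = a (Suc r) * b 0 + (\<Sum>s\<le>r. of_nat (Suc r choose Suc s) * a (r - s) * b (Suc s))"
    by (subst sum.atMost_Suc_shift) simp
  also have "\<dots> = a (Suc r) * b 0 + (\<Sum>s\<le>r. of_nat (r choose Suc s) * a (r - s) * b (Suc s))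
      + (\<Sum>s\<le>r. of_nat (r choose s) * a (r - s) * b (Suc s))"
    by (simp add: sum.distrib algebra_simps)
  also have "a (Suc r) * b 0 + (\<Sum>s\<le>r. of_nat (r choose Suc s) * a (r - s) * b (Suc s))
      = (\<Sum>s\<le>r. of_nat (r choose s) * a (Suc r - s) * b s)"
  proof -
    have "(\<Sum>s\<le>r. of_nat (r choose s) * a (Suc r - s) * b s)
       = a (Suc r) * b 0 + (\<Sum>s<r. of_nat (r choose Suc s) * a (r - s) * b (Suc s))"
    proof (cases r)
      case 0 then show ?thesis by simp
    next
      case (Suc r') then show ?thesis
        by (simp only: sum.atMost_Suc_shift lessThan_Suc_atMost) simp
    qed
    moreover have "(\<Sum>s\<le>r. of_nat (r choose Suc s) * a (r - s) * b (Suc s)) = (\<Sum>s<r. of_nat (r choose Suc s) * a (r - s) * b (Suc s))"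
      by (simp add: lessThan_Suc_atMost[symmetric])
    ultimately show ?thesis by simp
  qed
  finally show ?thesis by simp
qed

lemma hderiv_mult: "okS S \<Longrightarrow> Ck_on S r f \<Longrightarrow> Ck_on S r g \<Longrightarrow> x \<in> S \<Longrightarrow>
  hderiv S r (\<lambda>y. g y * f y) x = (\<Sum>s\<le>r. of_nat (r choose s) * hderiv S (r - s) g x * hderiv S s f x)"
proof (induction r arbitrary: f g x)
  case 0 then show ?case by simp
next
  case (Suc r)
  have df: "\<forall>x\<in>S. (f has_field_derivative Dw S f x) (at x within S)" and 
       dg: "\<forall>x\<in>S. (g has_field_derivative Dw S g x) (at x within S)"
    using Suc.prems unfolding Ck_Suc by auto
  have e: "\<forall>y\<in>S. Dw S (\<lambda>y. g y * f y) y = Dw S g y * f y + g y * Dw S f y"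
    using df dg Suc.prems(1) by (auto intro!: Dw_eqI derivative_eq_intros)
  have c: "Ck_on S r f" "Ck_on S r g" "Ck_on S r (Dw S f)" "Ck_on S r (Dw S g)"
    using Suc.prems Ck_Suc_mono unfolding Ck_Suc by auto
  have "hderiv S (Suc r) (\<lambda>y. g y * f y) x = hderiv S r (\<lambda>y. Dw S g y * f y + g y * Dw S f y) x"
    unfolding hderiv_Suc' using hderiv_cong[OF e Suc.prems(4)] .
  also have "\<dots> = hderiv S r (\<lambda>y. Dw S g y * f y) x + hderiv S r (\<lambda>y. g y * Dw S f y) x"
    by (rule hderiv_add) (auto intro: Ck_mult c Suc.prems)
  also have "\<dots> = (\<Sum>s\<le>r. of_nat (r choose s) * hderiv S (r - s) (Dw S g) x * hderiv S s f x)
     + (\<Sum>s\<le>r. of_nat (r choose s) * hderiv S (r - s) g x * hderiv S s (Dw S f) x)"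
    using Suc.IH[of f "Dw S g" x] Suc.IH[of "Dw S f" g x] c Suc.prems by simp
  also have "\<dots> = (\<Sum>s\<le>r. of_nat (r choose s) * hderiv S (Suc r - s) g x * hderiv S s f x)
     + (\<Sum>s\<le>r. of_nat (r choose s) * hderiv S (r - s) g x * hderiv S (Suc s) f x)"
    by (intro arg_cong2[where f="(+)"] sum.cong) (auto simp: hderiv_Suc'[symmetric] Suc_diff_le)
  also have "\<dots> = (\<Sum>s\<le>Suc r. of_nat (Suc r choose s) * hderiv S (Suc r - s) g x * hderiv S s f x)"
    by (rule binom_comb[of r "\<lambda>i. hderiv S i g x" "\<lambda>i. hderiv S i f x"])
  finally show ?case .
qed

lemma hderiv_const: "okS S \<Longrightarrow> x \<in> S \<Longrightarrow> hderiv S k (\<lambda>_. c) x = (if k = 0 then c else 0)"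
proof (induction k arbitrary: c x)
  case 0 then show ?case by simp
next
  case (Suc k)
  have e: "\<forall>y\<in>S. Dw S (\<lambda>_. c) y = 0" using Suc.prems(1) by (auto intro!: Dw_eqI)
  have "hderiv S (Suc k) (\<lambda>_. c) x = hderiv S k (\<lambda>_. 0) x"
    unfolding hderiv_Suc' using hderiv_cong[OF e Suc.prems(2)] .
  then show ?case using Suc by simp
qed

definition wmat :: "real set \<Rightarrow> (nat \<Rightarrow> real \<Rightarrow> real) \<Rightarrow> nat \<Rightarrow> real \<Rightarrow> real mat" where
  "wmat S f m x = Matrix.mat m m (\<lambda>(r,c). hderiv S r (f c) x)"

definition Wr :: "real set \<Rightarrow> (nat \<Rightarrow> real \<Rightarrow> real) \<Rightarrow> nat \<Rightarrow> real \<Rightarrow> real" where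
  "Wr S f m x = Determinant.det (wmat S f m x)"

lemma Wr_cong: "(\<forall>c<m. \<forall>y\<in>S. f c y = g c y) \<Longrightarrow> x \<in> S \<Longrightarrow> Wr S f m x = Wr S g m x"
  unfolding Wr_def wmat_def by (intro arg_cong[where f=Determinant.det] eq_matI) (auto intro: hderiv_cong)

lemma Wr_mult:
  assumes ok: "okS S" and g: "Ck_on S (m - 1) g" and f: "\<forall>c<m. Ck_on S (m - 1) (f c)" and x: "x \<in> S"
  shows "Wr S (\<lambda>c y. g y * f c y) m x = g x ^ m * Wr S f m x"
proof -
  define L where "L = Matrix.mat m m (\<lambda>(r,s). if s \<le> r then of_nat (r choose s) * hderiv S (r - s) g x else 0)"
  have L: "L \<in> carrier_mat m m" by (simp add: L_def)
  have B: "wmat S f m x \<in> carrier_mat m m" by (simp add: wmat_def)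
  have eq: "wmat S (\<lambda>c y. g y * f c y) m x = L * wmat S f m x"
  proof (rule eq_matI)
    fix r c assume rc: "r < dim_row (L * wmat S f m x)" "c < dim_col (L * wmat S f m x)"
    then have r: "r < m" and c: "c < m" by (auto simp: L_def wmat_def)
    have "(L * wmat S f m x) $$ (r, c) = (\<Sum>s\<in>{0..<m}. (if s \<le> r then of_nat (r choose s) * hderiv S (r - s) g x else 0) * hderiv S s (f c) x)"
      using r c by (simp add: L_def wmat_def scalar_prod_def)
    also have "\<dots> = (\<Sum>s\<in>{0..<m}. if s \<le> r then of_nat (r choose s) * hderiv S (r - s) g x * hderiv S s (f c) x else 0)"
      by (intro sum.cong) auto
    also have "\<dots> = (\<Sum>s\<in>{s\<in>{0..<m}. s \<le> r}. of_nat (r choose s) * hderiv S (r - s) g x * hderiv S s (f c) x)"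
      by (rule sum.inter_filter[symmetric]) simp
    also have "{s\<in>{0..<m}. s \<le> r} = {..r}" using r by auto
    also have "(\<Sum>s\<le>r. of_nat (r choose s) * hderiv S (r - s) g x * hderiv S s (f c) x) = hderiv S r (\<lambda>y. g y * f c y) x"
    proof -
      have "Ck_on S r g" using Ck_mono[OF _ g] r by simp
      moreover have "Ck_on S r (f c)" using Ck_mono[OF _ f[rule_format, OF c]] r by simp
      ultimately show ?thesis using hderiv_mult[OF ok _ _ x] by simp
    qed
    finally show "wmat S (\<lambda>c y. g y * f c y) m x $$ (r, c) = (L * wmat S f m x) $$ (r, c)"
      using r c by (simp add: wmat_def)
  qed (auto simp: L_def wmat_def)
  have "Determinant.det L = g x ^ m"
  proof -
    have "Determinant.det L = prod_list (diag_mat L)"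
      by (rule det_lower_triangular[OF _ L]) (auto simp: L_def)
    also have "\<dots> = (\<Prod>i = 0..<m. L $$ (i, i))" by (simp add: prod_list_diag_prod L_def)
    also have "\<dots> = (\<Prod>i = 0..<m. g x)" by (intro prod.cong) (auto simp: L_def)
    finally show ?thesis by simp
  qed
  then show ?thesis unfolding Wr_def eq det_mult[OF L B] by simp
qed

lemma Wr_one:
  assumes ok: "okS S" and f0: "\<forall>y\<in>S. f 0 y = 1" and x: "x \<in> S" and m: "m \<ge> 1"
  shows "Wr S f m x = Wr S (\<lambda>c. Dw S (f (Suc c))) (m - 1) x"
proof -
  define A where "A = wmat S f m x"
  have A: "A \<in> carrier_mat m m" by (simp add: A_def wmat_def)
  have col0: "A $$ (i, 0) = (if i = 0 then 1 else 0)" if "i < m" for i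
  proof -
    have "A $$ (i, 0) = hderiv S i (f 0) x" using that m by (simp add: A_def wmat_def)
    also have "\<dots> = hderiv S i (\<lambda>_. 1) x" using f0 x by (intro hderiv_cong) auto
    finally show ?thesis using hderiv_const[OF ok x] by simp
  qed
  have "Determinant.det A = (\<Sum>i<m. A $$ (i, 0) * cofactor A i 0)"
    using laplace_expansion_column[OF A, of 0] m by simp
  also have "\<dots> = (\<Sum>i<m. if i = 0 then cofactor A 0 0 else 0)"
    by (intro sum.cong) (auto simp: col0)
  also have "\<dots> = cofactor A 0 0" using m by simp
  also have "\<dots> = Determinant.det (mat_delete A 0 0)" by (simp add: cofactor_def)
  also have "mat_delete A 0 0 = wmat S (\<lambda>c. Dw S (f (Suc c))) (m - 1) x"
    by (rule eq_matI) (auto simp: mat_delete_def A_def wmat_def hderiv_Suc')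
  finally show ?thesis by (simp add: Wr_def A_def)
qed

lemma wronskian_Wr: "wronskian S \<phi> i x = Wr S (\<lambda>c. \<phi> (Suc c)) i x"
proof -
  have "(\<Prod>r<i. hderiv S r (\<phi> (Suc (p r))) x) = (\<Prod>r = 0..<i. wmat S (\<lambda>c. \<phi> (Suc c)) i x $$ (r, p r))"
    if "p permutes {0..<i}" for p
    using that by (auto simp: wmat_def atLeast0LessThan permutes_in_image intro!: prod.cong)
  then show ?thesis
    unfolding wronskian_def Wr_def det_def by (auto simp: wmat_def atLeast0LessThan intro!: sum.cong)
qed

lemma Wr_single: "Wr S f 1 x = f 0 x"
proof -
  define A where "A = wmat S f 1 x"
  have A: "A \<in> carrier_mat 1 1" by (simp add: A_def wmat_def)
  have "Determinant.det A = (\<Sum>i<1. A $$ (i, 0) * cofactor A i 0)"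
    using laplace_expansion_column[OF A, of 0] by simp
  also have "\<dots> = A $$ (0,0) * Determinant.det (mat_delete A 0 0)" by (simp add: cofactor_def)
  also have "Determinant.det (mat_delete A 0 0) = 1"
    by (simp add: det_def mat_delete_def A_def wmat_def)
  finally show ?thesis by (simp add: Wr_def A_def wmat_def)
qed

lemma Wr_single'[simp]: "Wr S f (Suc 0) x = f 0 x" using Wr_single by (simp add: One_nat_def)

lemma Wr_zero: "Wr S f 0 x = 1"
  by (simp add: Wr_def det_def wmat_def)


lemma ex_between: "ereal x < x0 \<Longrightarrow> \<exists>b. x < b \<and> ereal b < x0"
proof -
  assume a: "ereal x < x0"
  obtain z where z: "ereal x < z" "z < x0" using dense[OF a] by blast
  then show ?thesis by (cases z) auto
qed

lemma okS_lint: assumes "ereal T < x0" shows "okS (lint T x0)"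
  unfolding okS_def
proof
  fix x assume x: "x \<in> lint T x0"
  then have "ereal x < x0" by (simp add: lint_def)
  then obtain b where b: "x < b" "ereal b < x0" using ex_between by blast
  have "\<forall>z. z \<le> b \<longrightarrow> ereal z < x0" using b(2) by (metis ereal_less_eq(3) le_less_trans)
  then have sub: "{x..b} \<subseteq> lint T x0" using x b by (auto simp: lint_def)
  have "at x within {x..b} \<le> at x within lint T x0" using sub by (rule at_le)
  moreover have "at x within {x..b} = at_right x" using b by (simp add: at_within_Icc_at_right)
  ultimately show "at x within lint T x0 \<noteq> bot" using trivial_limit_at_right_real by (metis bot.extremum_uniqueI)
qed

lemma psi_1[simp]: "psi S \<phi> 1 j = \<phi> j" by (simp add: One_nat_def)
lemma psi_Suc: "1 \<le> k \<Longrightarrow> psi S \<phi> (Suc k) j = Dw S (\<lambda>y. psi S \<phi> k j y / psi S \<phi> k k y)"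
  by (cases k) auto
lemma Ufun_1[simp]: "Ufun S \<phi> u 1 = u" by (simp add: One_nat_def)
lemma Ufun_Suc: "1 \<le> k \<Longrightarrow> Ufun S \<phi> u (Suc k) = Dw S (\<lambda>y. Ufun S \<phi> u k y / psi S \<phi> k k y)"
  by (cases k) auto

lemma P_Suc: "(\<Prod>i\<in>{1..Suc k}. p i ^ (Suc (Suc k) - i)) = (\<Prod>i\<in>{1..k}. p i ^ (Suc k - i)) * (\<Prod>i\<in>{1..Suc k}. (p i :: real))"
proof -
  have "(\<Prod>i\<in>{1..Suc k}. p i ^ (Suc (Suc k) - i)) = (\<Prod>i\<in>{1..Suc k}. p i ^ (Suc k - i) * p i)"
    by (intro prod.cong) (auto simp: Suc_diff_le)
  also have "\<dots> = (\<Prod>i\<in>{1..Suc k}. p i ^ (Suc k - i)) * (\<Prod>i\<in>{1..Suc k}. p i)" by (simp add: prod.distrib)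
  also have "(\<Prod>i\<in>{1..Suc k}. p i ^ (Suc k - i)) = (\<Prod>i\<in>{1..k}. p i ^ (Suc k - i))"
  proof -
    have "{1..Suc k} = insert (Suc k) {1..k}" by auto
    then show ?thesis by (simp add: Suc_diff_le)
  qed
  finally show ?thesis .
qed

lemma ereal_lt_trans: "z \<le> b \<Longrightarrow> ereal b < x0 \<Longrightarrow> ereal z < x0"
  by (meson ereal_less_eq(3) le_less_trans)

lemma EV: assumes "ereal T < x0"
  shows "eventually P (left_filter x0) \<longleftrightarrow> (\<exists>c. ereal c < x0 \<and> (\<forall>y. c < y \<and> ereal y < x0 \<longrightarrow> P y))"
proof (cases x0)
  case (real r)
  then show ?thesis by (auto simp: left_filter_def eventually_at_left_field)
next
  case PInf
  then show ?thesis by (auto simp: left_filter_def eventually_at_top_dense)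
next
  case MInf
  then show ?thesis using assms by simp
qed

lemma EV_I: "ereal T < x0 \<Longrightarrow> ereal c < x0 \<Longrightarrow> (\<And>y. c < y \<Longrightarrow> ereal y < x0 \<Longrightarrow> P y) \<Longrightarrow> eventually P (left_filter x0)"
  using EV by blast

lemma F_nontriv: "ereal T < x0 \<Longrightarrow> left_filter x0 \<noteq> bot"
proof (cases x0)
  case (real r)
  then show ?thesis by (simp add: left_filter_def)
next
  case PInf
  then show ?thesis by (simp add: left_filter_def)
qed auto

lemma LH:
  fixes f g f' g' :: "real \<Rightarrow> real"
  assumes x0: "ereal T < x0"
    and f0: "(f \<longlongrightarrow> 0) (left_filter x0)" and g0: "(g \<longlongrightarrow> 0) (left_filter x0)"
    and gnz: "eventually (\<lambda>y. g y \<noteq> 0) (left_filter x0)"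
    and g'nz: "eventually (\<lambda>y. g' y \<noteq> 0) (left_filter x0)"
    and Df: "eventually (\<lambda>y. DERIV f y :> f' y) (left_filter x0)"
    and Dg: "eventually (\<lambda>y. DERIV g y :> g' y) (left_filter x0)"
    and lim: "filterlim (\<lambda>y. f' y / g' y) G (left_filter x0)"
  shows "filterlim (\<lambda>y. f y / g y) G (left_filter x0)"
proof (cases x0)
  case (real r)
  then have F: "left_filter x0 = at_left r" by (simp add: left_filter_def)
  show ?thesis unfolding F
    by (rule lhopital_left[OF f0[unfolded F] g0[unfolded F] gnz[unfolded F] g'nz[unfolded F] Df[unfolded F] Dg[unfolded F] lim[unfolded F]])
next
  case MInf then show ?thesis using x0 by simp
next
  case PInf
  then have F: "left_filter x0 = at_top" by (simp add: left_filter_def)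
  show ?thesis unfolding F filterlim_at_top_to_right
  proof (rule lhopital_right_0)
    let ?F = "\<lambda>x. f (inverse x)"
    let ?G = "\<lambda>x. g (inverse x)"
    let ?R = "at_right (0::real)"
    let ?D = "\<lambda>f' x. f' (inverse x) * - (inverse x ^ Suc (Suc 0))"
    show "(?F \<longlongrightarrow> 0) ?R" using f0 unfolding F filterlim_at_top_to_right .
    show "(?G \<longlongrightarrow> 0) ?R" using g0 unfolding F filterlim_at_top_to_right .
    show "eventually (\<lambda>x. ?G x \<noteq> 0) ?R" using gnz unfolding F eventually_at_top_to_right .
    show "eventually (\<lambda>x. DERIV ?G x  :> ?D g' x) ?R"
      unfolding eventually_at_right_to_top
      using Dg[unfolded F] eventually_ge_at_top[where c=1]
      by eventually_elim (rule derivative_eq_intros DERIV_chain'[where f=inverse] | simp)+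
    show "eventually (\<lambda>x. DERIV ?F x  :> ?D f' x) ?R"
      unfolding eventually_at_right_to_top
      using Df[unfolded F] eventually_ge_at_top[where c=1]
      by eventually_elim (rule derivative_eq_intros DERIV_chain'[where f=inverse] | simp)+
    show "eventually (\<lambda>x. ?D g' x \<noteq> 0) ?R"
      unfolding eventually_at_right_to_top
      using g'nz[unfolded F] eventually_ge_at_top[where c=1]
      by eventually_elim auto
    show "filterlim (\<lambda>x. ?D f' x / ?D g' x) G ?R"
      unfolding filterlim_at_right_to_top
      apply (intro filterlim_cong[THEN iffD2, OF refl refl _ lim[unfolded F]])
      using eventually_ge_at_top[where c=1]
      by eventually_elim simp
  qed
qed

lemma sign_const:
  fixes f :: "real \<Rightarrow> real"
  assumes conv: "\<And>a b z. a \<in> A \<Longrightarrow> b \<in> A \<Longrightarrow> a \<le> z \<Longrightarrow> z \<le> b \<Longrightarrow> z \<in> A"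
    and cont: "\<forall>y\<in>A. isCont f y" and nz: "\<forall>y\<in>A. f y \<noteq> 0"
  shows "(\<forall>y\<in>A. f y > 0) \<or> (\<forall>y\<in>A. f y < 0)"
proof (rule ccontr)
  assume "\<not> ?thesis"
  then obtain p q where pq: "p \<in> A" "q \<in> A" "f p \<le> 0" "f q \<ge> 0" by force
  have cI: "\<forall>x. a \<le> x \<and> x \<le> b \<longrightarrow> isCont f x" if "a \<in> A" "b \<in> A" for a b
    using conv cont that by blast
  show False
  proof (cases "p \<le> q")
    case True
    obtain z where z: "p \<le> z" "z \<le> q" "f z = 0" using IVT[of f p 0 q] pq True cI[OF pq(1,2)] by blast
    then have "z \<in> A" using conv[OF pq(1,2)] by blast
    then show False using nz z by auto
  next
    case False
    obtain z where z: "q \<le> z" "z \<le> p" "f z = 0" using IVT2[of f p 0 q] pq False cI[OF pq(2,1)] by force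
    then have "z \<in> A" using conv[OF pq(2,1)] by blast
    then show False using nz z by auto
  qed
qed

lemma inc_tail:
  fixes h :: "real \<Rightarrow> real"
  assumes x0: "ereal T < x0" and c: "ereal c < x0"
    and inc: "\<And>a b. c < a \<Longrightarrow> a < b \<Longrightarrow> ereal b < x0 \<Longrightarrow> h a < h b"
  shows "eventually (\<lambda>y. h y \<noteq> 0) (left_filter x0)"
    and "\<exists>L. ((\<lambda>y. ereal (h y)) \<longlongrightarrow> L) (left_filter x0)"
proof -
  let ?A = "{y. c < y \<and> ereal y < x0}"
  show "eventually (\<lambda>y. h y \<noteq> 0) (left_filter x0)"
  proof (cases "\<exists>z\<in>?A. h z = 0")
    case True
    then obtain z where z: "c < z" "ereal z < x0" "h z = 0" by auto
    show ?thesis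
      by (rule EV_I[OF x0 z(2)]) (use inc z in force)
  next
    case False
    then show ?thesis by (intro EV_I[OF x0 c]) auto
  qed
  define L where "L = (SUP y\<in>?A. ereal (h y))"
  have "((\<lambda>y. ereal (h y)) \<longlongrightarrow> L) (left_filter x0)"
  proof (rule order_tendstoI)
    fix a assume "a < L"
    then obtain y0 where y0: "y0 \<in> ?A" "a < ereal (h y0)" unfolding L_def less_SUP_iff by blast
    show "eventually (\<lambda>y. a < ereal (h y)) (left_filter x0)"
    proof (rule EV_I[OF x0])
      show "ereal y0 < x0" using y0 by auto
      fix y assume "y0 < y" "ereal y < x0"
      then have "h y0 < h y" using inc y0 by auto
      then have "ereal (h y0) < ereal (h y)" by simp
      then show "a < ereal (h y)" using y0(2) by (rule less_trans[rotated])
    qed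
  next
    fix a assume "L < a"
    show "eventually (\<lambda>y. ereal (h y) < a) (left_filter x0)"
    proof (rule EV_I[OF x0 c])
      fix y assume "c < y" "ereal y < x0"
      then have "ereal (h y) \<le> L" unfolding L_def by (intro SUP_upper) auto
      then show "ereal (h y) < a" using \<open>L < a\<close> by simp
    qed
  qed
  then show "\<exists>L. ((\<lambda>y. ereal (h y)) \<longlongrightarrow> L) (left_filter x0)" by blast
qed

lemma main_tail:
  fixes h h' :: "real \<Rightarrow> real"
  assumes x0: "ereal T < x0"
    and ev: "eventually (\<lambda>y. DERIV h y :> h' y \<and> isCont h' y \<and> h' y \<noteq> 0) (left_filter x0)"
  shows "eventually (\<lambda>y. h y \<noteq> 0) (left_filter x0)"
    and "\<exists>L. ((\<lambda>y. ereal (h y)) \<longlongrightarrow> L) (left_filter x0)"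
proof -
  obtain c where c: "ereal c < x0" and P: "\<And>y. c < y \<Longrightarrow> ereal y < x0 \<Longrightarrow> DERIV h y :> h' y \<and> isCont h' y \<and> h' y \<noteq> 0"
    using ev unfolding EV[OF x0] by blast
  let ?A = "{y. c < y \<and> ereal y < x0}"
  have conv: "z \<in> ?A" if "a \<in> ?A" "b \<in> ?A" "a \<le> z" "z \<le> b" for a b z
    using that ereal_lt_trans[of z b x0] by auto
  have sgn: "(\<forall>y\<in>?A. h' y > 0) \<or> (\<forall>y\<in>?A. h' y < 0)"
  proof (rule sign_const)
    show "\<And>a b z. a \<in> ?A \<Longrightarrow> b \<in> ?A \<Longrightarrow> a \<le> z \<Longrightarrow> z \<le> b \<Longrightarrow> z \<in> ?A" by (rule conv)
    show "\<forall>y\<in>?A. isCont h' y" using P by blast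
    show "\<forall>y\<in>?A. h' y \<noteq> 0" using P by blast
  qed
  have between: "x \<in> ?A" if "c < a" "a \<le> x" "x \<le> b" "ereal b < x0" for a b x
    using that ereal_lt_trans[of x b x0] by auto
  have both: "eventually (\<lambda>y. h y \<noteq> 0) (left_filter x0) \<and> (\<exists>L. ((\<lambda>y. ereal (h y)) \<longlongrightarrow> L) (left_filter x0))"
  proof (cases "\<forall>y\<in>?A. h' y > 0")
    case True
    have inc: "h a < h b" if "c < a" "a < b" "ereal b < x0" for a b
      by (rule DERIV_pos_imp_increasing[OF that(2)]) (use P True between that in \<open>blast\<close>)
    show ?thesis using inc_tail[OF x0 c, of h] inc by blast
  next
    case False
    then have neg: "\<forall>y\<in>?A. h' y < 0" using sgn by blast
    have inc: "- h a < - h b" if "c < a" "a < b" "ereal b < x0" for a b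
    proof (rule DERIV_pos_imp_increasing[OF that(2)])
      fix x assume "a \<le> x" "x \<le> b"
      then have "x \<in> ?A" using between that by blast
      then show "\<exists>y. DERIV (\<lambda>x. - h x) x :> y \<and> 0 < y"
        using P neg by (intro exI[of _ "- h' x"]) (auto intro: derivative_eq_intros)
    qed
    obtain L where L: "((\<lambda>y. ereal (- h y)) \<longlongrightarrow> L) (left_filter x0)"
      using inc_tail(2)[OF x0 c, of "\<lambda>y. - h y"] inc by blast
    have "((\<lambda>y. - ereal (- h y)) \<longlongrightarrow> - L) (left_filter x0)" using L by (rule tendsto_uminus_ereal)
    then have "((\<lambda>y. ereal (h y)) \<longlongrightarrow> - L) (left_filter x0)" by simp
    moreover have "eventually (\<lambda>y. - h y \<noteq> 0) (left_filter x0)"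
      using inc_tail(1)[OF x0 c, of "\<lambda>y. - h y"] inc by blast
    ultimately show ?thesis by auto
  qed
  then show "eventually (\<lambda>y. h y \<noteq> 0) (left_filter x0)" by blast
  show "\<exists>L. ((\<lambda>y. ereal (h y)) \<longlongrightarrow> L) (left_filter x0)" using both by blast
qed

context
  fixes T :: real and x0 :: ereal and n :: nat and \<phi> :: "nat \<Rightarrow> real \<Rightarrow> real" and S
  assumes S_def: "S = lint T x0" and Tx0: "ereal T < x0" and n2: "n \<ge> 2"
    and reg: "\<forall>i\<in>{1..n}. Ck_on S (n - 1) (\<phi> i)"
    and Wpos: "\<forall>i\<in>{1..n}. \<forall>x\<in>S. wronskian S \<phi> i x > 0"
begin

lemma okS: "okS S" using okS_lint[OF Tx0] S_def by simp

lemma Qk: "1 \<le> k \<Longrightarrow> k \<le> n \<Longrightarrow> (\<forall>j\<in>{k..n}. Ck_on S (n - k) (psi S \<phi> k j)) \<and>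
   (\<forall>m x. k + m \<le> Suc n \<longrightarrow> x \<in> S \<longrightarrow> wronskian S \<phi> (k - 1 + m) x =
      (\<Prod>i\<in>{1..<k}. psi S \<phi> i i x ^ (k + m - i)) * Wr S (\<lambda>c. psi S \<phi> k (k + c)) m x)"
proof (induction k rule: nat_induct_at_least)
  case base
  show ?case using reg by (auto simp: wronskian_Wr)
next
  case (Suc k)
  then have k: "1 \<le> k" "Suc k \<le> n" by auto
  from Suc.IH k have IHr: "\<forall>j\<in>{k..n}. Ck_on S (n - k) (psi S \<phi> k j)"
    and IHw: "\<And>m x. k + m \<le> Suc n \<Longrightarrow> x \<in> S \<Longrightarrow> wronskian S \<phi> (k - 1 + m) x =
      (\<Prod>i\<in>{1..<k}. psi S \<phi> i i x ^ (k + m - i)) * Wr S (\<lambda>c. psi S \<phi> k (k + c)) m x" by auto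
  define g where "g = psi S \<phi> k k"
  have nz: "g x \<noteq> 0" if x: "x \<in> S" for x
  proof -
    have "wronskian S \<phi> k x = (\<Prod>i\<in>{1..<k}. psi S \<phi> i i x ^ (k + 1 - i)) * g x"
      using IHw[of 1 x] x k by (simp add: Wr_single g_def)
    moreover have "wronskian S \<phi> k x > 0" using Wpos x k by auto
    ultimately show ?thesis by auto
  qed
  have gC: "Ck_on S (n - k) g" using IHr k by (simp add: g_def)
  have regS: "\<forall>j\<in>{Suc k..n}. Ck_on S (n - Suc k) (psi S \<phi> (Suc k) j)"
  proof
    fix j assume j: "j \<in> {Suc k..n}"
    have "Ck_on S (Suc (n - Suc k)) (\<lambda>y. psi S \<phi> k j y / psi S \<phi> k k y)"
      using Ck_div[OF okS _ gC[unfolded g_def]] IHr j nz k by (auto simp: g_def Suc_diff_Suc)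
    then show "Ck_on S (n - Suc k) (psi S \<phi> (Suc k) j)" using k by (simp add: psi_Suc Ck_Dw)
  qed
  have W: "wronskian S \<phi> (Suc k - 1 + m) x =
      (\<Prod>i\<in>{1..<Suc k}. psi S \<phi> i i x ^ (Suc k + m - i)) * Wr S (\<lambda>c. psi S \<phi> (Suc k) (Suc k + c)) m x"
    if m: "Suc k + m \<le> Suc n" and x: "x \<in> S" for m x
  proof -
    define F where "F = (\<lambda>c. psi S \<phi> k (k + c))"
    have F0: "F 0 = g" by (simp add: F_def g_def)
    have one: "\<forall>y\<in>S. F 0 y / g y = 1" using nz F0 by simp
    have inner: "Wr S (\<lambda>c y. F c y / g y) (Suc m) x = Wr S (\<lambda>c. psi S \<phi> (Suc k) (Suc k + c)) m x"
    proof -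
      have "Wr S (\<lambda>c y. F c y / g y) (Suc m) x = Wr S (\<lambda>c. Dw S (\<lambda>y. F (Suc c) y / g y)) m x"
        using Wr_one[of S "\<lambda>c y. F c y / g y" x "Suc m"] okS one x by simp
      also have "(\<lambda>c. Dw S (\<lambda>y. F (Suc c) y / g y)) = (\<lambda>c. psi S \<phi> (Suc k) (Suc k + c))"
        by (rule ext) (simp add: F_def g_def psi_Suc[OF k(1)])
      finally show ?thesis .
    qed
    have "Wr S F (Suc m) x = Wr S (\<lambda>c y. g y * (F c y / g y)) (Suc m) x"
      using nz x by (intro Wr_cong) auto
    also have "\<dots> = g x ^ Suc m * Wr S (\<lambda>c y. F c y / g y) (Suc m) x"
    proof (rule Wr_mult[OF okS _ _ x])
      show "Ck_on S (Suc m - 1) g" using Ck_mono[OF _ gC] m by simp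
      show "\<forall>c<Suc m. Ck_on S (Suc m - 1) (\<lambda>y. F c y / g y)"
      proof (intro allI impI)
        fix c assume c: "c < Suc m"
        have "Ck_on S (n - k) (\<lambda>y. F c y / g y)"
          using Ck_div[OF okS _ gC] IHr c m nz by (auto simp: F_def)
        moreover have "Suc m - 1 \<le> n - k" using m by simp
        ultimately show "Ck_on S (Suc m - 1) (\<lambda>y. F c y / g y)" using Ck_mono by blast
      qed
    qed
    also note inner
    finally have WF: "Wr S F (Suc m) x = g x ^ Suc m * Wr S (\<lambda>c. psi S \<phi> (Suc k) (Suc k + c)) m x" .
    have "wronskian S \<phi> (Suc k - 1 + m) x = wronskian S \<phi> (k - 1 + Suc m) x" using k by simp
    also have "\<dots> = (\<Prod>i\<in>{1..<k}. psi S \<phi> i i x ^ (k + Suc m - i)) * Wr S F (Suc m) x"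
      using IHw[of "Suc m" x] m x by (simp add: F_def)
    finally have A: "wronskian S \<phi> (Suc k - 1 + m) x = (\<Prod>i\<in>{1..<k}. psi S \<phi> i i x ^ (k + Suc m - i)) * Wr S F (Suc m) x" .
    have B: "(\<Prod>i\<in>{1..<k}. psi S \<phi> i i x ^ (k + Suc m - i)) * g x ^ Suc m
       = (\<Prod>i\<in>{1..<Suc k}. psi S \<phi> i i x ^ (Suc k + m - i))"
      using k by (simp add: prod.atLeastLessThan_Suc g_def)
    show ?thesis unfolding A WF B[symmetric] by (simp add: mult.assoc)
  qed
  show ?case using regS W by blast
qed

lemma psi_nz: "k \<in> {1..n} \<Longrightarrow> x \<in> S \<Longrightarrow> psi S \<phi> k k x \<noteq> 0"
  and W_prod: "k \<in> {1..n} \<Longrightarrow> x \<in> S \<Longrightarrow> wronskian S \<phi> k x = (\<Prod>i\<in>{1..k}. psi S \<phi> i i x ^ (Suc k - i))"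
proof -
  assume k: "k \<in> {1..n}" and x: "x \<in> S"
  have "wronskian S \<phi> (k - 1 + 1) x = (\<Prod>i\<in>{1..<k}. psi S \<phi> i i x ^ (k + 1 - i)) * Wr S (\<lambda>c. psi S \<phi> k (k + c)) 1 x"
  proof -
    have all: "\<forall>m x. k + m \<le> Suc n \<longrightarrow> x \<in> S \<longrightarrow> wronskian S \<phi> (k - 1 + m) x =
      (\<Prod>i\<in>{1..<k}. psi S \<phi> i i x ^ (k + m - i)) * Wr S (\<lambda>c. psi S \<phi> k (k + c)) m x"
      using Qk[of k] k by auto
    show ?thesis using all[rule_format, of 1 x] k x by simp
  qed
  then have "wronskian S \<phi> k x = (\<Prod>i\<in>{1..<k}. psi S \<phi> i i x ^ (k + 1 - i)) * psi S \<phi> k k x"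
    using k by simp
  also have "\<dots> = (\<Prod>i\<in>{1..k}. psi S \<phi> i i x ^ (Suc k - i))"
  proof -
    have "{1..k} = insert k {1..<k}" using k by auto
    then show ?thesis by simp
  qed
  finally show "wronskian S \<phi> k x = (\<Prod>i\<in>{1..k}. psi S \<phi> i i x ^ (Suc k - i))" .
  show "psi S \<phi> k k x \<noteq> 0" using Wpos k x \<open>wronskian S \<phi> k x = _ * psi S \<phi> k k x\<close> by force
qed

lemma psi_reg: "k \<in> {1..n} \<Longrightarrow> j \<in> {k..n} \<Longrightarrow> Ck_on S (n - k) (psi S \<phi> k j)"
  using Qk[of k] by auto


lemma W0: "wronskian S \<phi> 0 x = 1" by (simp add: wronskian_Wr Wr_zero)

lemma W_pos0: "k \<le> n \<Longrightarrow> x \<in> S \<Longrightarrow> wronskian S \<phi> k x > 0"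
  using Wpos W0 by (cases "k = 0") auto

lemma W_step: "Suc k \<le> n \<Longrightarrow> x \<in> S \<Longrightarrow>
   wronskian S \<phi> (Suc k) x = wronskian S \<phi> k x * (\<Prod>i\<in>{1..Suc k}. psi S \<phi> i i x)"
proof -
  assume k: "Suc k \<le> n" and x: "x \<in> S"
  have "wronskian S \<phi> (Suc k) x = (\<Prod>i\<in>{1..Suc k}. psi S \<phi> i i x ^ (Suc (Suc k) - i))"
    using W_prod[of "Suc k" x] k x by simp
  also have "\<dots> = (\<Prod>i\<in>{1..k}. psi S \<phi> i i x ^ (Suc k - i)) * (\<Prod>i\<in>{1..Suc k}. psi S \<phi> i i x)"
    by (rule P_Suc)
  also have "(\<Prod>i\<in>{1..k}. psi S \<phi> i i x ^ (Suc k - i)) = wronskian S \<phi> k x"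
    using W_prod[of k x] k x W0 by (cases "k = 0") auto
  finally show ?thesis .
qed

lemma q_psi: "k \<in> {1..n} \<Longrightarrow> x \<in> S \<Longrightarrow> 1 / psi S \<phi> k k x = qfun S \<phi> n (k - 1) x"
proof -
  assume k: "k \<in> {1..n}" and x: "x \<in> S"
  show ?thesis
  proof (cases "k = 1")
    case True
    have "wronskian S \<phi> 1 x = \<phi> 1 x" by (simp add: wronskian_Wr)
    then have "\<phi> 1 x > 0" using Wpos x n2 by force
    then show ?thesis using True by (simp add: qfun_def)
  next
    case False
    then obtain j where j: "k = Suc (Suc j)" using k by (metis One_nat_def atLeastAtMost_iff not0_implies_Suc not_one_le_zero)
    define a where "a = wronskian S \<phi> j x"
    define b where "b = wronskian S \<phi> (Suc j) x"
    define c where "c = wronskian S \<phi> (Suc (Suc j)) x"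
    define Q1 where "Q1 = (\<Prod>i\<in>{1..Suc j}. psi S \<phi> i i x)"
    have pos: "a > 0" "b > 0" "c > 0" using W_pos0 k x j by (auto simp: a_def b_def c_def)
    have b: "b = a * Q1" using W_step[of j x] k j x by (simp add: a_def b_def Q1_def)
    have "c = b * (\<Prod>i\<in>{1..Suc (Suc j)}. psi S \<phi> i i x)" using W_step[of "Suc j" x] k j x by (simp add: b_def c_def)
    also have "(\<Prod>i\<in>{1..Suc (Suc j)}. psi S \<phi> i i x) = Q1 * psi S \<phi> k k x"
    proof -
      have "{1..Suc (Suc j)} = insert (Suc (Suc j)) {1..Suc j}" by auto
      then show ?thesis by (simp add: Q1_def j mult.commute)
    qed
    finally have c: "c = b * (Q1 * psi S \<phi> k k x)" .
    have q: "qfun S \<phi> n (k - 1) x = b^2 / \<bar>a * c\<bar>"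
      using k j by (simp add: qfun_def a_def b_def c_def Let_def)
    have "Q1 \<noteq> 0" using b pos by auto
    moreover have "psi S \<phi> k k x \<noteq> 0" using c pos by auto
    moreover have "\<bar>a * c\<bar> = a * c" using pos by simp
    ultimately show ?thesis unfolding q using pos b c by (simp add: field_simps power2_eq_square)
  qed
qed

lemma psi_quot_deriv: "k \<in> {1..<n} \<Longrightarrow> j \<in> {k..n} \<Longrightarrow> x \<in> S \<Longrightarrow>
  ((\<lambda>y. psi S \<phi> k j y / psi S \<phi> k k y) has_field_derivative psi S \<phi> (Suc k) j x) (at x within S)"
proof -
  assume k: "k \<in> {1..<n}" and j: "j \<in> {k..n}" and x: "x \<in> S"
  have "Ck_on S (Suc (n - Suc k)) (\<lambda>y. psi S \<phi> k j y / psi S \<phi> k k y)"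
    using Ck_div[OF okS psi_reg psi_reg] psi_nz k j by (auto simp: Suc_diff_Suc)
  then show ?thesis using x k by (auto simp: Ck_Suc psi_Suc)
qed

lemma psi_Suc_self: "k \<in> {1..n} \<Longrightarrow> x \<in> S \<Longrightarrow> psi S \<phi> (Suc k) k x = 0"
proof -
  assume k: "k \<in> {1..n}" and x: "x \<in> S"
  have "psi S \<phi> (Suc k) k x = Dw S (\<lambda>_. 1) x"
    using k x psi_nz by (auto simp: psi_Suc intro!: Dw_cong)
  also have "\<dots> = 0" using okS x by (auto intro!: Dw_eqI)
  finally show ?thesis .
qed

context
  fixes a :: "nat \<Rightarrow> real" and u
  assumes u_def: "u = (\<lambda>x. \<Sum>j=1..n. a j * \<phi> j x)"
begin

lemma U_sum: "1 \<le> k \<Longrightarrow> k \<le> n \<Longrightarrow> \<forall>x\<in>S. Ufun S \<phi> u k x = (\<Sum>j=k..n. a j * psi S \<phi> k j x)"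
proof (induction k rule: nat_induct_at_least)
  case base then show ?case by (simp add: u_def)
next
  case (Suc k)
  then have k: "k \<in> {1..<n}" by auto
  show ?case
  proof
    fix x assume x: "x \<in> S"
    have e: "\<forall>y\<in>S. Ufun S \<phi> u k y / psi S \<phi> k k y = (\<Sum>j=k..n. a j * (psi S \<phi> k j y / psi S \<phi> k k y))"
      using Suc by (simp add: sum_divide_distrib)
    have d: "((\<lambda>y. \<Sum>j=k..n. a j * (psi S \<phi> k j y / psi S \<phi> k k y)) has_field_derivative
        (\<Sum>j=k..n. a j * psi S \<phi> (Suc k) j x)) (at x within S)"
      using psi_quot_deriv[OF k _ x] by (intro DERIV_sum DERIV_cmult) auto
    have "Ufun S \<phi> u (Suc k) x = Dw S (\<lambda>y. \<Sum>j=k..n. a j * (psi S \<phi> k j y / psi S \<phi> k k y)) x"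
      using k x e by (auto simp: Ufun_Suc intro!: Dw_cong)
    also have "\<dots> = (\<Sum>j=k..n. a j * psi S \<phi> (Suc k) j x)" using Dw_eqI[OF okS x d] .
    also have "\<dots> = (\<Sum>j=Suc k..n. a j * psi S \<phi> (Suc k) j x)"
      using psi_Suc_self[of k x] k x by (simp add: sum.atLeast_Suc_atMost)
    finally show "Ufun S \<phi> u (Suc k) x = (\<Sum>j=Suc k..n. a j * psi S \<phi> (Suc k) j x)" .
  qed
qed

lemma U_deriv: "k \<in> {1..n} \<Longrightarrow> x \<in> S \<Longrightarrow>
  ((\<lambda>y. Ufun S \<phi> u k y / psi S \<phi> k k y) has_field_derivative Ufun S \<phi> u (Suc k) x) (at x within S)"
proof -
  assume k: "k \<in> {1..n}" and x: "x \<in> S"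
  have e: "\<forall>y\<in>S. Ufun S \<phi> u k y / psi S \<phi> k k y = (\<Sum>j=k..n. a j * (psi S \<phi> k j y / psi S \<phi> k k y))"
    using U_sum k by (simp add: sum_divide_distrib)
  show ?thesis
  proof (cases "k = n")
    case True
    have e': "\<forall>y\<in>S. Ufun S \<phi> u k y / psi S \<phi> k k y = a n"
      using e True psi_nz k by simp
    have d: "((\<lambda>y. Ufun S \<phi> u k y / psi S \<phi> k k y) has_field_derivative 0) (at x within S)"
      using hfd_transform[OF x e' DERIV_const] .
    moreover have "Ufun S \<phi> u (Suc k) x = 0"
      using Dw_eqI[OF okS x d] k by (simp add: Ufun_Suc)
    ultimately show ?thesis by simp
  next
    case False
    then have k': "k \<in> {1..<n}" "Suc k \<le> n" using k by auto
    have d: "((\<lambda>y. \<Sum>j=k..n. a j * (psi S \<phi> k j y / psi S \<phi> k k y)) has_field_derivative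
        (\<Sum>j=k..n. a j * psi S \<phi> (Suc k) j x)) (at x within S)"
      using psi_quot_deriv[OF k'(1) _ x] by (intro DERIV_sum DERIV_cmult) auto
    have "(\<Sum>j=k..n. a j * psi S \<phi> (Suc k) j x) = (\<Sum>j=Suc k..n. a j * psi S \<phi> (Suc k) j x)"
      using psi_Suc_self[of k x] k x k' by (simp add: sum.atLeast_Suc_atMost)
    also have "\<dots> = Ufun S \<phi> u (Suc k) x" using U_sum[of "Suc k"] k' x by auto
    finally have eq: "(\<Sum>j=k..n. a j * psi S \<phi> (Suc k) j x) = Ufun S \<phi> u (Suc k) x" .
    show ?thesis using hfd_transform[OF x e d] eq by simp
  qed
qed

lemma U_last: "x \<in> S \<Longrightarrow> Ufun S \<phi> u (Suc n) x = 0"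
proof -
  assume x: "x \<in> S"
  have k: "n \<in> {1..n}" using n2 by auto
  have e': "\<forall>y\<in>S. Ufun S \<phi> u n y / psi S \<phi> n n y = a n"
    using U_sum[of n] psi_nz k n2 by simp
  have d: "((\<lambda>y. Ufun S \<phi> u n y / psi S \<phi> n n y) has_field_derivative 0) (at x within S)"
    using hfd_transform[OF x e' DERIV_const] .
  then show ?thesis using Dw_eqI[OF okS x d] n2 by (simp add: Ufun_Suc)
qed

lemma Mop_eq: "1 \<le> k \<Longrightarrow> k \<le> n \<Longrightarrow> \<forall>x\<in>S. Mop S \<phi> n (k - 1) u x = Ufun S \<phi> u k x / psi S \<phi> k k x"
proof (induction k rule: nat_induct_at_least)
  case base
  show ?case using q_psi[of 1] n2 by (auto simp: divide_inverse mult.commute)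
next
  case (Suc k)
  then have k: "k \<in> {1..n}" "Suc k \<in> {1..n}" by auto
  show ?case
  proof
    fix x assume x: "x \<in> S"
    have "Mop S \<phi> n (Suc k - 1) u x = qfun S \<phi> n k x * Dw S (Mop S \<phi> n (k - 1) u) x"
      using k by (cases k) auto
    also have "Dw S (Mop S \<phi> n (k - 1) u) x = Dw S (\<lambda>y. Ufun S \<phi> u k y / psi S \<phi> k k y) x"
      using Suc x k by (intro Dw_cong) auto
    also have "\<dots> = Ufun S \<phi> u (Suc k) x" using Dw_eqI[OF okS x U_deriv[OF k(1) x]] .
    also have "qfun S \<phi> n k x = 1 / psi S \<phi> (Suc k) (Suc k) x" using q_psi[OF k(2) x] by simp
    finally show "Mop S \<phi> n (Suc k - 1) u x = Ufun S \<phi> u (Suc k) x / psi S \<phi> (Suc k) (Suc k) x" by simp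
  qed
qed

lemma Mop_last: "x \<in> S \<Longrightarrow> Dw S (Mop S \<phi> n (n - 1) u) x = 0"
proof -
  assume x: "x \<in> S"
  have k: "n \<in> {1..n}" using n2 by auto
  have "Dw S (Mop S \<phi> n (n - 1) u) x = Dw S (\<lambda>y. Ufun S \<phi> u n y / psi S \<phi> n n y) x"
    using Mop_eq[of n] n2 x by (intro Dw_cong) auto
  also have "\<dots> = Ufun S \<phi> u (Suc n) x" using Dw_eqI[OF okS x U_deriv[OF k x]] .
  finally show ?thesis using U_last x by simp
qed

end


lemma evT: "eventually (\<lambda>y. T < y \<and> ereal y < x0) (left_filter x0)"
  by (rule EV_I[OF Tx0 Tx0]) auto

lemma intS: "T < y \<Longrightarrow> ereal y < x0 \<Longrightarrow> y \<in> interior S"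
proof -
  assume y: "T < y" "ereal y < x0"
  let ?O = "{T<..} \<inter> ereal -` {..<x0}"
  have "open ?O" by (intro open_Int open_greaterThan open_ereal_vimage open_lessThan)
  moreover have "y \<in> ?O" using y by auto
  moreover have "?O \<subseteq> S" by (auto simp: S_def lint_def)
  ultimately show ?thesis by (rule interiorI)
qed

lemma evI: "eventually (\<lambda>y. y \<in> interior S \<and> y \<in> S) (left_filter x0)"
  using evT by eventually_elim (use intS interior_subset in blast)

lemma ev_deriv: "k \<in> {1..<n} \<Longrightarrow> j \<in> {k..n} \<Longrightarrow>
   eventually (\<lambda>y. DERIV (\<lambda>y. psi S \<phi> k j y / psi S \<phi> k k y) y :> psi S \<phi> (Suc k) j y) (left_filter x0)"
  using evI by eventually_elim (use psi_quot_deriv at_within_interior in metis)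

lemma ev_cont: "k \<in> {1..n} \<Longrightarrow> j \<in> {k..n} \<Longrightarrow> eventually (\<lambda>y. isCont (psi S \<phi> k j) y) (left_filter x0)"
  using evI by eventually_elim (use psi_reg Ck_cont continuous_on_interior in blast)

lemma ev_nzk: "k \<in> {1..n} \<Longrightarrow> eventually (\<lambda>y. psi S \<phi> k k y \<noteq> 0) (left_filter x0)"
  using evI by eventually_elim (use psi_nz in blast)

lemma EVNZ: "1 \<le> k \<Longrightarrow> k \<le> j \<Longrightarrow> j \<le> n \<Longrightarrow> eventually (\<lambda>y. psi S \<phi> k j y \<noteq> 0) (left_filter x0)"
proof (induction "j - k" arbitrary: k)
  case 0
  then have "k = j" by simp
  then show ?case using ev_nzk 0 by auto
next
  case (Suc d)
  then have k: "k \<in> {1..<n}" "j \<in> {k..n}" "Suc k \<le> j" by auto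
  have IH: "eventually (\<lambda>y. psi S \<phi> (Suc k) j y \<noteq> 0) (left_filter x0)"
    using Suc.hyps(1)[of "Suc k"] Suc.hyps(2) Suc.prems by simp
  have "eventually (\<lambda>y. DERIV (\<lambda>y. psi S \<phi> k j y / psi S \<phi> k k y) y :> psi S \<phi> (Suc k) j y
      \<and> isCont (psi S \<phi> (Suc k) j) y \<and> psi S \<phi> (Suc k) j y \<noteq> 0) (left_filter x0)"
    using ev_deriv[OF k(1,2)] ev_cont[of "Suc k" j] IH k by (auto intro: eventually_conj)
  from main_tail(1)[OF Tx0 this]
  have "eventually (\<lambda>y. psi S \<phi> k j y / psi S \<phi> k k y \<noteq> 0) (left_filter x0)" .
  then show ?case by eventually_elim auto
qed

context
  assumes phinz: "\<forall>i\<in>{1..n}. eventually (\<lambda>x. \<phi> i x \<noteq> 0) (left_filter x0)"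
    and phidom: "\<forall>i\<in>{1..<n}. dominates (left_filter x0) (\<phi> i) (\<phi> (Suc i))"
begin

lemma Dom0: assumes j1: "1 \<le> j" shows "Suc j \<le> m \<Longrightarrow> m \<le> n \<Longrightarrow> ((\<lambda>y. \<phi> m y / \<phi> j y) \<longlongrightarrow> 0) (left_filter x0)"
proof (induction m rule: nat_induct_at_least)
  case base
  then show ?case using phidom j1 by (auto simp: dominates_def)
next
  case (Suc m)
  have a: "((\<lambda>y. \<phi> (Suc m) y / \<phi> m y) \<longlongrightarrow> 0) (left_filter x0)"
    using phidom Suc j1 by (auto simp: dominates_def)
  have b: "((\<lambda>y. \<phi> m y / \<phi> j y) \<longlongrightarrow> 0) (left_filter x0)" using Suc by auto
  have lim: "((\<lambda>y. (\<phi> (Suc m) y / \<phi> m y) * (\<phi> m y / \<phi> j y)) \<longlongrightarrow> 0 * 0) (left_filter x0)"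
    by (rule tendsto_mult[OF a b])
  have e: "eventually (\<lambda>y. (\<phi> (Suc m) y / \<phi> m y) * (\<phi> m y / \<phi> j y) = \<phi> (Suc m) y / \<phi> j y) (left_filter x0)"
    using phinz Suc j1 by (auto elim!: eventually_mono)
  show ?case using lim unfolding tendsto_cong[OF e] by simp
qed

lemma DOM: "j < n \<Longrightarrow> 1 \<le> j \<Longrightarrow> \<forall>k m. 1 \<le> k \<longrightarrow> k \<le> j \<longrightarrow> j < m \<longrightarrow> m \<le> n \<longrightarrow>
    ((\<lambda>y. psi S \<phi> k m y / psi S \<phi> k j y) \<longlongrightarrow> 0) (left_filter x0)"
proof (induction j rule: less_induct)
  case (less j)
  show ?case
  proof (intro allI impI)
    fix k m assume km: "1 \<le> k" "k \<le> j" "j < m" "m \<le> n"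
    have jn: "j \<in> {1..<n}" "m \<in> {j..n}" using less km by auto
    have "eventually (\<lambda>y. DERIV (\<lambda>y. psi S \<phi> j m y / psi S \<phi> j j y) y :> psi S \<phi> (Suc j) m y
      \<and> isCont (psi S \<phi> (Suc j) m) y \<and> psi S \<phi> (Suc j) m y \<noteq> 0) (left_filter x0)"
      using ev_deriv[OF jn] ev_cont[of "Suc j" m] EVNZ[of "Suc j" m] km less by (auto intro: eventually_conj)
    from main_tail(2)[OF Tx0 this] obtain L where
      L: "((\<lambda>y. ereal (psi S \<phi> j m y / psi S \<phi> j j y)) \<longlongrightarrow> L) (left_filter x0)" by blast
    have claim: "\<forall>k. 1 \<le> k \<longrightarrow> k \<le> j \<longrightarrow> j - k = d \<longrightarrow>
       ((\<lambda>y. ereal (psi S \<phi> k m y / psi S \<phi> k j y)) \<longlongrightarrow> L) (left_filter x0)" for d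
    proof (induction d)
      case 0
      show ?case using L by auto
    next
      case (Suc d)
      show ?case
      proof (intro allI impI)
        fix k assume k: "1 \<le> k" "k \<le> j" "j - k = Suc d"
        then have kk: "k < j" "k \<in> {1..<n}" "k < n" using less by auto
        let ?G = "filtercomap ereal (nhds L)"
        have IH: "filterlim (\<lambda>y. psi S \<phi> (Suc k) m y / psi S \<phi> (Suc k) j y) ?G (left_filter x0)"
          using Suc.IH k by (auto simp: filterlim_filtercomap_iff o_def)
        have f0: "((\<lambda>y. psi S \<phi> k m y / psi S \<phi> k k y) \<longlongrightarrow> 0) (left_filter x0)"
          using less.IH[OF kk(1) kk(3)] k kk km by auto
        have g0: "((\<lambda>y. psi S \<phi> k j y / psi S \<phi> k k y) \<longlongrightarrow> 0) (left_filter x0)"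
          using less.IH[OF kk(1) kk(3)] k kk km less by auto
        have gnz: "eventually (\<lambda>y. psi S \<phi> k j y / psi S \<phi> k k y \<noteq> 0) (left_filter x0)"
          using EVNZ[of k j] ev_nzk[of k] k kk less by (auto elim: eventually_elim2)
        have g'nz: "eventually (\<lambda>y. psi S \<phi> (Suc k) j y \<noteq> 0) (left_filter x0)"
          using EVNZ[of "Suc k" j] k kk less by auto
        have Df: "eventually (\<lambda>y. DERIV (\<lambda>y. psi S \<phi> k m y / psi S \<phi> k k y) y :> psi S \<phi> (Suc k) m y) (left_filter x0)"
          using ev_deriv[of k m] kk km by auto
        have Dg: "eventually (\<lambda>y. DERIV (\<lambda>y. psi S \<phi> k j y / psi S \<phi> k k y) y :> psi S \<phi> (Suc k) j y) (left_filter x0)"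
          using ev_deriv[of k j] kk km less by auto
        have lim: "filterlim (\<lambda>y. (psi S \<phi> k m y / psi S \<phi> k k y) / (psi S \<phi> k j y / psi S \<phi> k k y)) ?G (left_filter x0)"
          by (rule LH[OF Tx0 f0 g0 gnz g'nz Df Dg IH])
        have e: "eventually (\<lambda>y. (psi S \<phi> k m y / psi S \<phi> k k y) / (psi S \<phi> k j y / psi S \<phi> k k y)
           = psi S \<phi> k m y / psi S \<phi> k j y) (left_filter x0)"
          using ev_nzk[of k] kk by (auto elim!: eventually_mono)
        have eq: "filterlim (\<lambda>y. (psi S \<phi> k m y / psi S \<phi> k k y) / (psi S \<phi> k j y / psi S \<phi> k k y)) ?G (left_filter x0)
          = filterlim (\<lambda>y. psi S \<phi> k m y / psi S \<phi> k j y) ?G (left_filter x0)"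
          by (rule filterlim_cong[OF refl refl e])
        have "filterlim (\<lambda>y. psi S \<phi> k m y / psi S \<phi> k j y) ?G (left_filter x0)"
          using lim unfolding eq .
        then show "((\<lambda>y. ereal (psi S \<phi> k m y / psi S \<phi> k j y)) \<longlongrightarrow> L) (left_filter x0)"
          by (simp add: filterlim_filtercomap_iff o_def)
      qed
    qed
    have L1: "((\<lambda>y. ereal (psi S \<phi> 1 m y / psi S \<phi> 1 j y)) \<longlongrightarrow> L) (left_filter x0)"
      using claim[of "j - 1"] less by auto
    have "((\<lambda>y. \<phi> m y / \<phi> j y) \<longlongrightarrow> 0) (left_filter x0)" using Dom0[of j m] less km by auto
    then have "((\<lambda>y. ereal (psi S \<phi> 1 m y / psi S \<phi> 1 j y)) \<longlongrightarrow> ereal 0) (left_filter x0)" by simp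
    then have "L = ereal 0" using tendsto_unique[OF F_nontriv[OF Tx0] L1] by simp
    then have "((\<lambda>y. ereal (psi S \<phi> k m y / psi S \<phi> k j y)) \<longlongrightarrow> ereal 0) (left_filter x0)"
      using claim[of "j - k"] km by auto
    then show "((\<lambda>y. psi S \<phi> k m y / psi S \<phi> k j y) \<longlongrightarrow> 0) (left_filter x0)" by simp
  qed
qed

lemma dom_final: "k \<in> {1..n} \<Longrightarrow> j \<in> {k..<n} \<Longrightarrow> dominates (left_filter x0) (psi S \<phi> k j) (psi S \<phi> k (Suc j))"
  unfolding dominates_def using DOM[of j] by auto

lemma Mop_lim:
  assumes u_def: "u = (\<lambda>x. \<Sum>j=1..n. a j * \<phi> j x)" and k: "k \<in> {1..n}"
  shows "(Mop S \<phi> n (k - 1) u \<longlongrightarrow> a k) (left_filter x0)"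
proof -
  have ev: "eventually (\<lambda>y. Mop S \<phi> n (k - 1) u y = (\<Sum>j=k..n. a j * (psi S \<phi> k j y / psi S \<phi> k k y))) (left_filter x0)"
    using evI
  proof eventually_elim
    case (elim y)
    then have y: "y \<in> S" by blast
    show ?case using Mop_eq[OF u_def, of k] U_sum[OF u_def, of k] k y by (simp add: sum_divide_distrib)
  qed
  have "((\<lambda>y. \<Sum>j=k..n. a j * (psi S \<phi> k j y / psi S \<phi> k k y)) \<longlongrightarrow> (\<Sum>j=k..n. a j * (if j = k then 1 else 0))) (left_filter x0)"
  proof (intro tendsto_sum tendsto_mult tendsto_const)
    fix j assume j: "j \<in> {k..n}"
    show "((\<lambda>y. psi S \<phi> k j y / psi S \<phi> k k y) \<longlongrightarrow> (if j = k then 1 else 0)) (left_filter x0)"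
    proof (cases "j = k")
      case True
      have "eventually (\<lambda>y. psi S \<phi> k j y / psi S \<phi> k k y = 1) (left_filter x0)"
        using ev_nzk[of k] k True by (auto elim!: eventually_mono)
      then show ?thesis using True by (simp add: tendsto_eventually)
    next
      case False
      then show ?thesis using DOM[of k] k j by auto
    qed
  qed
  moreover have "(\<Sum>j=k..n. a j * (if j = k then 1 else 0)) = (\<Sum>j=k..n. if j = k then a j else 0)"
    by (intro sum.cong) auto
  moreover have "(\<Sum>j=k..n. if j = k then a j else 0) = a k" using k by (simp add: sum.delta)
  ultimately have "((\<lambda>y. \<Sum>j=k..n. a j * (psi S \<phi> k j y / psi S \<phi> k k y)) \<longlongrightarrow> a k) (left_filter x0)" by metis
  then show ?thesis using tendsto_cong[OF ev] by simp
qed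

end

end

theorem proposition8p1:
  fixes T :: real and x0 :: ereal and n :: nat
    and \<phi> :: "nat \<Rightarrow> real \<Rightarrow> real" and a :: "nat \<Rightarrow> real" and u :: "real \<Rightarrow> real"
  defines "S \<equiv> lint T x0" and "F \<equiv> left_filter x0"
  assumes Tx0: "ereal T < x0"
    and n2: "n \<ge> 2"
    and scale: "cheb_asym_scale T x0 n \<phi>"
    and AC: "\<forall>i\<in>{1..n}. ACk_on S (n - 1) (\<phi> i)"
    and Wpos: "\<forall>i\<in>{1..n}. \<forall>x\<in>S. wronskian S \<phi> i x > 0"
    and a_nz: "\<forall>j\<in>{1..n}. a j \<noteq> 0"
    and u_def: "u = (\<lambda>x. \<Sum>j=1..n. a j * \<phi> j x)"
  shows
    "(\<forall>k\<in>{1..<n}. \<forall>j\<in>{Suc k..n}. \<forall>x\<in>S.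
        ((\<lambda>y. psi S \<phi> k j y / psi S \<phi> k k y) has_vector_derivative psi S \<phi> (Suc k) j x)
          (at x within S))
     \<and> (\<forall>k\<in>{1..n}. \<forall>x\<in>S.
        ((\<lambda>y. Ufun S \<phi> u k y / psi S \<phi> k k y) has_vector_derivative Ufun S \<phi> u (Suc k) x)
          (at x within S))
     \<and> (\<forall>k\<in>{1..n}. \<forall>x\<in>S. psi S \<phi> k k x \<noteq> 0)
     \<and> (\<forall>k\<in>{1..n}. \<forall>x\<in>S. Ufun S \<phi> u k x = (\<Sum>j=k..n. a j * psi S \<phi> k j x))
     \<and> (\<forall>k\<in>{1..n}. \<forall>j\<in>{k..<n}. dominates F (psi S \<phi> k j) (psi S \<phi> k (Suc j)))
     \<and> (\<forall>k\<in>{1..n}. \<forall>x\<in>S. 1 / psi S \<phi> k k x = qfun S \<phi> n (k - 1) x)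
     \<and> (\<forall>x\<in>S. Ufun S \<phi> u (Suc n) x = 0)
     \<and> (\<forall>x\<in>S. Dw S (Mop S \<phi> n (n - 1) u) x = 0)
     \<and> (\<forall>k\<in>{1..n}. \<forall>x\<in>S. Mop S \<phi> n (k - 1) u x = Ufun S \<phi> u k x / psi S \<phi> k k x)
     \<and> (\<forall>k\<in>{1..n}. (Mop S \<phi> n (k - 1) u \<longlongrightarrow> a k) F)"
  proof -
  have Sd: "S = lint T x0" by (simp add: S_def)
  have reg: "\<forall>i\<in>{1..n}. Ck_on S (n - 1) (\<phi> i)" using scale by (simp add: cheb_asym_scale_def S_def)
  have phinz: "\<forall>i\<in>{1..n}. eventually (\<lambda>x. \<phi> i x \<noteq> 0) (left_filter x0)"
    using scale by (simp add: cheb_asym_scale_def)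
  have phidom: "\<forall>i\<in>{1..<n}. dominates (left_filter x0) (\<phi> i) (\<phi> (Suc i))"
    using scale by (simp add: cheb_asym_scale_def)
  note ctx = Sd Tx0 n2 reg Wpos
  have c1: "\<forall>k\<in>{1..<n}. \<forall>j\<in>{Suc k..n}. \<forall>x\<in>S.
        ((\<lambda>y. psi S \<phi> k j y / psi S \<phi> k k y) has_vector_derivative psi S \<phi> (Suc k) j x) (at x within S)"
    using psi_quot_deriv[OF ctx] by (auto simp: hv_iff)
  have c2: "\<forall>k\<in>{1..n}. \<forall>x\<in>S.
        ((\<lambda>y. Ufun S \<phi> u k y / psi S \<phi> k k y) has_vector_derivative Ufun S \<phi> u (Suc k) x) (at x within S)"
    using U_deriv[OF ctx u_def] by (auto simp: hv_iff)
  have c3: "\<forall>k\<in>{1..n}. \<forall>x\<in>S. psi S \<phi> k k x \<noteq> 0" using psi_nz[OF ctx] by blast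
  have c4: "\<forall>k\<in>{1..n}. \<forall>x\<in>S. Ufun S \<phi> u k x = (\<Sum>j=k..n. a j * psi S \<phi> k j x)"
    using U_sum[OF ctx u_def] by auto
  have c5: "\<forall>k\<in>{1..n}. \<forall>j\<in>{k..<n}. dominates F (psi S \<phi> k j) (psi S \<phi> k (Suc j))"
    using dom_final[OF ctx phinz phidom] by (simp add: F_def)
  have c6: "\<forall>k\<in>{1..n}. \<forall>x\<in>S. 1 / psi S \<phi> k k x = qfun S \<phi> n (k - 1) x"
    using q_psi[OF ctx] by blast
  have c7: "\<forall>x\<in>S. Ufun S \<phi> u (Suc n) x = 0" using U_last[OF ctx u_def] by blast
  have c8: "\<forall>x\<in>S. Dw S (Mop S \<phi> n (n - 1) u) x = 0" using Mop_last[OF ctx u_def] by blast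
  have c9: "\<forall>k\<in>{1..n}. \<forall>x\<in>S. Mop S \<phi> n (k - 1) u x = Ufun S \<phi> u k x / psi S \<phi> k k x"
    using Mop_eq[OF ctx u_def] by auto
  have c10: "\<forall>k\<in>{1..n}. (Mop S \<phi> n (k - 1) u \<longlongrightarrow> a k) F"
    using Mop_lim[OF ctx phinz phidom u_def] by (simp add: F_def)
  show ?thesis using c1 c2 c3 c4 c5 c6 c7 c8 c9 c10 by blast
qed

end
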